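(* Let $\mathcal N$ be a feed-forward ReLU network with any fixed weights and biases, and let $\mathcal N^{\mathrm{bias}}_0$ be the network with the same weights and all biases set to $0$. Then the total number of (non-empty) activation regions in $\mathbb R^{n_{\mathrm{in}}}$ of $\mathcal N^{\mathrm{bias}}_0$ is at most that of $\mathcal N$.
   Context: A feed-forward ReLU network $\mathcal N$ with input dimension $n_{\mathrm{in}}$ and output dimension $1$ has hidden layers $1,\dots,d$; edges only between consecutive layers (arbitrary connectivity, no tied weights). A neuron $z$ in layer $1$ has pre-activation $z(x)=\sum_i w_{z,i}x_i$; a neuron $z$ in layer $\ell\ge2$ has pre-activation $z(x)=\sum_{z'}w_{z,z'}\max\{0,z'(x)-b_{z'}\}$ over neurons $z'$ of layer $\ell-1$ joined to $z$; $b_z$ is its bias. The output is $\mathcal N(x)=\sum_z w_z\max\{0,z(x)-b_z\}-b_{\mathrm{out}}$ over neurons of layer $d$. An activation region is a non-empty set $\{x:\ \mathrm{sgn}(z(x)-b_z)=a_z\text{ for every hidden neuron }z\}$ for some $a_z\in\{-1,1\}$. *)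

theory Defs
  imports "HOL-Analysis.Analysis"
begin

text \<open>Missing edges are encoded by weight 0 (arbitrary connectivity between consecutive layers).\<close>

record ('n, 'z) relu_net =
  neurons :: "'z set"
  layer   :: "'z \<Rightarrow> nat"
  depth   :: nat
  win     :: "'z \<Rightarrow> 'n \<Rightarrow> real"
  wt      :: "'z \<Rightarrow> 'z \<Rightarrow> real"      \<comment> \<open>wt z z' : weight of edge from z' (layer l-1) to z (layer l)\<close>
  bias    :: "'z \<Rightarrow> real"
  wout    :: "'z \<Rightarrow> real"
  bout    :: real

definition wf_net :: "('n::finite, 'z) relu_net \<Rightarrow> bool" where
  "wf_net N \<longleftrightarrow> finite (neurons N) \<and> (\<forall>z\<in>neurons N. 1 \<le> layer N z \<and> layer N z \<le> depth N)"

text \<open>Pre-activation of neuron z, computed as if z were in layer l.\<close>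
fun preact_at :: "('n::finite, 'z) relu_net \<Rightarrow> nat \<Rightarrow> 'z \<Rightarrow> real^'n \<Rightarrow> real" where
  "preact_at N 0 z x = 0"
| "preact_at N (Suc 0) z x = (\<Sum>i\<in>UNIV. win N z i * x $ i)"
| "preact_at N (Suc (Suc l)) z x =
     (\<Sum>z'\<in>{z'\<in>neurons N. layer N z' = Suc l}.
        wt N z z' * max 0 (preact_at N (Suc l) z' x - bias N z'))"

definition preact :: "('n::finite, 'z) relu_net \<Rightarrow> 'z \<Rightarrow> real^'n \<Rightarrow> real" where
  "preact N z x = preact_at N (layer N z) z x"

definition net_output :: "('n::finite, 'z) relu_net \<Rightarrow> real^'n \<Rightarrow> real" where
  "net_output N x = (\<Sum>z\<in>{z\<in>neurons N. layer N z = depth N}. wout N z * max 0 (preact N z x - bias N z)) - bout N"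

definition activation_regions :: "('n::finite, 'z) relu_net \<Rightarrow> (real^'n) set set" where
  "activation_regions N =
     {R. R \<noteq> {} \<and> (\<exists>a. (\<forall>z\<in>neurons N. a z \<in> {-1, 1::real}) \<and>
          R = {x. \<forall>z\<in>neurons N. sgn (preact N z x - bias N z) = a z})}"

definition zero_bias :: "('n, 'z) relu_net \<Rightarrow> ('n, 'z) relu_net" where
  "zero_bias N = N\<lparr>bias := (\<lambda>_. 0), bout := 0\<rparr>"

end

theory Submission
  imports Defs
begin

lemma zb_simps[simp]: "neurons (zero_bias N) = neurons N" "layer (zero_bias N) = layer N"
  "win (zero_bias N) = win N" "wt (zero_bias N) = wt N" "bias (zero_bias N) = (\<lambda>_. 0)"
  by (simp_all add: zero_bias_def)

lemma relu_lip: "\<bar>max 0 (a - b) - max 0 (c::real)\<bar> \<le> \<bar>a - c\<bar> + \<bar>b\<bar>"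
  by (simp add: max_def abs_if)

lemma diff_bound: "\<forall>z. \<exists>C. \<forall>x. \<bar>preact_at N l z x - preact_at (zero_bias N) l z x\<bar> \<le> C"
proof (induction l)
  case 0 then show ?case by auto
next
  case (Suc l)
  show ?case
  proof (cases l)
    case 0 then show ?thesis by auto
  next
    case (Suc m)
    from Suc.IH[unfolded Suc] obtain C' where C': "\<And>z x. \<bar>preact_at N (Suc m) z x - preact_at (zero_bias N) (Suc m) z x\<bar> \<le> C' z"
      by metis
    show ?thesis
    proof
      fix z
      let ?S = "{z'\<in>neurons N. layer N z' = Suc m}"
      show "\<exists>C. \<forall>x. \<bar>preact_at N (Suc l) z x - preact_at (zero_bias N) (Suc l) z x\<bar> \<le> C"
      proof (intro exI allI)
        fix x
        have "\<bar>preact_at N (Suc l) z x - preact_at (zero_bias N) (Suc l) z x\<bar>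
          = \<bar>\<Sum>z'\<in>?S. wt N z z' * max 0 (preact_at N (Suc m) z' x - bias N z') - wt N z z' * max 0 (preact_at (zero_bias N) (Suc m) z' x - 0)\<bar>"
          using Suc by (simp add: sum_subtractf)
        also have "\<dots> \<le> (\<Sum>z'\<in>?S. \<bar>wt N z z' * max 0 (preact_at N (Suc m) z' x - bias N z') - wt N z z' * max 0 (preact_at (zero_bias N) (Suc m) z' x - 0)\<bar>)"
          by (rule sum_abs)
        also have "\<dots> \<le> (\<Sum>z'\<in>?S. \<bar>wt N z z'\<bar> * (C' z' + \<bar>bias N z'\<bar>))"
        proof (rule sum_mono)
          fix z' assume "z' \<in> ?S"
          have "\<bar>wt N z z' * max 0 (preact_at N (Suc m) z' x - bias N z') - wt N z z' * max 0 (preact_at (zero_bias N) (Suc m) z' x - 0)\<bar>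
             = \<bar>wt N z z'\<bar> * \<bar>max 0 (preact_at N (Suc m) z' x - bias N z') - max 0 (preact_at (zero_bias N) (Suc m) z' x)\<bar>"
            by (simp add: right_diff_distrib[symmetric] abs_mult)
          also have "\<dots> \<le> \<bar>wt N z z'\<bar> * (C' z' + \<bar>bias N z'\<bar>)"
            apply (rule mult_left_mono[OF _ abs_ge_zero])
            using relu_lip[of "preact_at N (Suc m) z' x" "bias N z'" "preact_at (zero_bias N) (Suc m) z' x"] C'[of z' x]
            by linarith
          finally show "\<bar>wt N z z' * max 0 (preact_at N (Suc m) z' x - bias N z') - wt N z z' * max 0 (preact_at (zero_bias N) (Suc m) z' x - 0)\<bar> \<le> \<bar>wt N z z'\<bar> * (C' z' + \<bar>bias N z'\<bar>)" .
        qed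
        finally show "\<bar>preact_at N (Suc l) z x - preact_at (zero_bias N) (Suc l) z x\<bar> \<le> (\<Sum>z'\<in>?S. \<bar>wt N z z'\<bar> * (C' z' + \<bar>bias N z'\<bar>))" .
      qed
    qed
  qed
qed

lemma max_scale: "0 \<le> (t::real) \<Longrightarrow> max 0 (t * a) = t * max 0 a"
  by (cases "t = 0") (auto simp add: max_def mult_left_mono mult_le_0_iff zero_le_mult_iff)

lemma homog: "0 \<le> t \<Longrightarrow> preact_at (zero_bias N) l z (t *\<^sub>R x) = t * preact_at (zero_bias N) l z x"
proof (induction l arbitrary: z)
  case 0 then show ?case by simp
next
  case (Suc l)
  show ?case
  proof (cases l)
    case 0 then show ?thesis by (simp add: sum_distrib_left algebra_simps)
  next
    case (Suc m)
    show ?thesis using Suc.IH Suc.prems unfolding Suc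
      by (simp add: sum_distrib_left max_scale algebra_simps)
  qed
qed



lemma region_finite: "finite (activation_regions N)" if "finite (neurons N)"
proof -
  let ?F = "\<lambda>a. {x. \<forall>z\<in>neurons N. sgn (preact N z x - bias N z) = a z}"
  have "activation_regions N \<subseteq> ?F ` (neurons N \<rightarrow>\<^sub>E {-1, 1::real})"
  proof
    fix R assume "R \<in> activation_regions N"
    then obtain a where a: "\<forall>z\<in>neurons N. a z \<in> {-1, 1::real}" "R = ?F a"
      unfolding activation_regions_def by blast
    have "restrict a (neurons N) \<in> neurons N \<rightarrow>\<^sub>E {-1, 1::real}" using a(1) by auto
    moreover have "R = ?F (restrict a (neurons N))" using a(2) by auto
    ultimately show "R \<in> ?F ` (neurons N \<rightarrow>\<^sub>E {-1, 1::real})" by blast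
  qed
  moreover have "finite (neurons N \<rightarrow>\<^sub>E {-1, 1::real})" using that by (simp add: finite_PiE)
  ultimately show ?thesis by (meson finite_surj)
qed

lemma scale_exists:
  assumes fin: "finite (neurons N)"
    and nz: "\<forall>z\<in>neurons N. preact (zero_bias N) z x0 \<noteq> 0"
  shows "\<exists>y. \<forall>z\<in>neurons N. sgn (preact N z y - bias N z) = sgn (preact (zero_bias N) z x0)"
proof -
  obtain C where C: "\<And>l z x. \<bar>preact_at N l z x - preact_at (zero_bias N) l z x\<bar> \<le> C l z"
    using diff_bound by metis
  define p where "p z = preact (zero_bias N) z x0" for z
  define K where "K z = \<bar>C (layer N z) z\<bar> + \<bar>bias N z\<bar>" for z
  define t where "t = 1 + (\<Sum>z\<in>neurons N. K z / \<bar>p z\<bar>)"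
  have K0: "K z \<ge> 0" for z unfolding K_def by simp
  have t0: "t \<ge> 1" unfolding t_def using K0 by (simp add: sum_nonneg)
  show ?thesis
  proof (intro exI ballI)
    fix z assume z: "z \<in> neurons N"
    have pz: "p z \<noteq> 0" using nz z p_def by simp
    have "K z / \<bar>p z\<bar> \<le> (\<Sum>z\<in>neurons N. K z / \<bar>p z\<bar>)"
      using z fin by (intro member_le_sum) (auto simp: K0)
    hence "K z / \<bar>p z\<bar> < t" unfolding t_def by simp
    hence Kt: "K z < t * \<bar>p z\<bar>" using pz by (simp add: divide_less_eq)
    have hz: "preact (zero_bias N) z (t *\<^sub>R x0) = t * p z"
      unfolding preact_def p_def using homog[of t] t0 by simp
    have d: "\<bar>preact N z (t *\<^sub>R x0) - preact (zero_bias N) z (t *\<^sub>R x0)\<bar> \<le> \<bar>C (layer N z) z\<bar>"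
      unfolding preact_def using C[of "layer N z" z "t *\<^sub>R x0"] by simp
    have "\<bar>(preact N z (t *\<^sub>R x0) - bias N z) - t * p z\<bar> < t * \<bar>p z\<bar>"
      using d hz Kt unfolding K_def by linarith
    moreover have "t > 0" using t0 by simp
    ultimately show "sgn (preact N z (t *\<^sub>R x0) - bias N z) = sgn (preact (zero_bias N) z x0)"
      unfolding p_def[symmetric]
      by (cases "p z > 0") (auto simp: sgn_if abs_if mult_pos_pos mult_pos_neg split: if_splits)
  qed
qed

theorem mainTheorem16:
  fixes N :: "('n::finite, 'z) relu_net"
  assumes "wf_net N"
  shows "card (activation_regions (zero_bias N)) \<le> card (activation_regions N)"
proof -
  have fin: "finite (neurons N)" using assms by (simp add: wf_net_def)
  let ?P = "\<lambda>R z. sgn (preact (zero_bias N) z (SOME x. x \<in> R))"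
  define f where "f R = {y. \<forall>z\<in>neurons N. sgn (preact N z y - bias N z) = ?P R z}" for R
  have key: "R = {x. \<forall>z\<in>neurons N. sgn (preact (zero_bias N) z x) = ?P R z}
      \<and> (\<forall>z\<in>neurons N. ?P R z \<in> {-1,1})"
    if R: "R \<in> activation_regions (zero_bias N)" for R
  proof -
    from R obtain a where ne: "R \<noteq> {}" and a: "\<forall>z\<in>neurons N. a z \<in> {-1, 1::real}"
      and Ra: "R = {x. \<forall>z\<in>neurons N. sgn (preact (zero_bias N) z x - 0) = a z}"
      unfolding activation_regions_def by auto
    have "(SOME x. x \<in> R) \<in> R" using ne by (simp add: some_in_eq)
    hence eq: "\<forall>z\<in>neurons N. ?P R z = a z" using Ra by auto
    show ?thesis using Ra eq a by auto
  qed
  have "inj_on f (activation_regions (zero_bias N))"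
  proof (rule inj_onI)
    fix R1 R2 assume R1: "R1 \<in> activation_regions (zero_bias N)" and R2: "R2 \<in> activation_regions (zero_bias N)"
      and e: "f R1 = f R2"
    have nz: "\<forall>z\<in>neurons N. preact (zero_bias N) z (SOME x. x \<in> R1) \<noteq> 0"
      using key[OF R1] by (auto simp: sgn_if split: if_splits)
    obtain y where y: "\<forall>z\<in>neurons N. sgn (preact N z y - bias N z) = ?P R1 z"
      using scale_exists[OF fin nz] by blast
    hence "y \<in> f R1" unfolding f_def by auto
    hence "y \<in> f R2" using e by simp
    hence "\<forall>z\<in>neurons N. sgn (preact N z y - bias N z) = ?P R2 z" unfolding f_def by auto
    hence "\<forall>z\<in>neurons N. ?P R1 z = ?P R2 z" using y by auto
    then show "R1 = R2" using key[OF R1] key[OF R2] by auto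
  qed
  moreover have "f ` activation_regions (zero_bias N) \<subseteq> activation_regions N"
  proof
    fix S assume "S \<in> f ` activation_regions (zero_bias N)"
    then obtain R where R: "R \<in> activation_regions (zero_bias N)" and S: "S = f R" by blast
    have nz: "\<forall>z\<in>neurons N. preact (zero_bias N) z (SOME x. x \<in> R) \<noteq> 0"
      using key[OF R] by (auto simp: sgn_if split: if_splits)
    have "S \<noteq> {}" using scale_exists[OF fin nz] unfolding S f_def by auto
    moreover have "\<exists>a. (\<forall>z\<in>neurons N. a z \<in> {-1, 1::real}) \<and>
          S = {x. \<forall>z\<in>neurons N. sgn (preact N z x - bias N z) = a z}"
      apply (rule exI[of _ "?P R"])
      using key[OF R] S f_def by simp
    ultimately show "S \<in> activation_regions N"
      unfolding activation_regions_def by blast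
  qed
  ultimately show ?thesis using region_finite[OF fin] by (rule card_inj_on_le)
qed
end
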